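(* Let $p$ be the POP of length 4 defined by the relations $1>2$, $1>3$ and $4>3$; equivalently, avoiding $p$ means simultaneously avoiding the patterns $4312, 4213, 3214, 4123, 3124$. Let $a(n)=|S_n(p)|$. Then $a(0)=a(1)=1$, and for $n\geq 2$, $a(n)=4a(n-1)-3a(n-2)+1$, so that $$a(n)=\frac{3^n-2n+3}{4}\quad(n\geq 0).$$ Moreover, $$\sum_{n\geq 0}a(n)x^n=\frac{(1-2x)^2}{(1-3x)(1-x)^2}.$$
   Context: An $n$-permutation is a word $\pi=\pi_1\cdots\pi_n$ containing each of $1,\ldots,n$ exactly once; $S_n$ is the set of $n$-permutations ($S_0$ consists of the empty permutation). A partially ordered pattern (POP) $p$ of length $k$ is a partial order on the label set $\{1,\ldots,k\}$; it is described by a set of generating relations, where a relation $x>y$ means that in an occurrence the entry in the $x$-th chosen position must be larger than the entry in the $y$-th chosen position, and labels not involved in any relation are unconstrained. An $n$-permutation $\pi$ contains $p$ if there are indices $1\leq i_1<\cdots<i_k\leq n$ such that $\pi_{i_x}>\pi_{i_y}$ whenever $x>y$ in the partial order; otherwise $\pi$ avoids $p$. $S_n(p)$ denotes the set of $n$-permutations avoiding $p$. A permutation $\pi$ avoids a classical pattern $q$ if it has no subsequence order-isomorphic to $q$. *)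

theory Defs
  imports Main "HOL-Computational_Algebra.Formal_Power_Series"
begin

definition perms :: "nat \<Rightarrow> nat list set" where
  "perms n = {w. distinct w \<and> set w = {1..n}}"

text \<open>A POP of length k given by a set R of generating relations; (x,y) \<in> R means x > y.
  Positions are chosen by a strictly increasing map i from labels {1..k} to 0-based indices.\<close>
definition contains_pop :: "nat list \<Rightarrow> nat \<Rightarrow> (nat \<times> nat) set \<Rightarrow> bool" where
  "contains_pop w k R \<longleftrightarrow>
     (\<exists>i::nat \<Rightarrow> nat. strict_mono_on {1..k} i \<and> (\<forall>x\<in>{1..k}. i x < length w) \<and>
        (\<forall>(x,y)\<in>R. w ! (i x) > w ! (i y)))"

definition avoids_pop :: "nat list \<Rightarrow> nat \<Rightarrow> (nat \<times> nat) set \<Rightarrow> bool" where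
  "avoids_pop w k R \<longleftrightarrow> \<not> contains_pop w k R"

definition pop_avoiders :: "nat \<Rightarrow> nat \<Rightarrow> (nat \<times> nat) set \<Rightarrow> nat list set" where
  "pop_avoiders n k R = {w \<in> perms n. avoids_pop w k R}"

definition contains_classical :: "nat list \<Rightarrow> nat list \<Rightarrow> bool" where
  "contains_classical w q \<longleftrightarrow>
     (\<exists>i::nat \<Rightarrow> nat. strict_mono_on {0..<length q} i \<and> (\<forall>a<length q. i a < length w) \<and>
        (\<forall>a<length q. \<forall>b<length q. w ! (i a) < w ! (i b) \<longleftrightarrow> q ! a < q ! b))"

definition avoids_classical :: "nat list \<Rightarrow> nat list \<Rightarrow> bool" where
  "avoids_classical w q \<longleftrightarrow> \<not> contains_classical w q"

end

theory Submission
  imports Defs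
begin

unbundle fps_syntax

definition occ4 :: "nat list \<Rightarrow> bool" where
  "occ4 w \<longleftrightarrow> (\<exists>i1 i2 i3 i4. i1<i2 \<and> i2<i3 \<and> i3<i4 \<and> i4 < length w \<and>
      w!i2 < w!i1 \<and> w!i3 < w!i1 \<and> w!i3 < w!i4)"

definition occ3 :: "nat list \<Rightarrow> bool" where
  "occ3 w \<longleftrightarrow> (\<exists>i1 i2 i3. i1<i2 \<and> i2<i3 \<and> i3 < length w \<and> w!i2 < w!i1 \<and> w!i3 < w!i1)"

lemma occ4_occ3: "occ4 w \<Longrightarrow> occ3 w"
  unfolding occ4_def occ3_def by (meson less_trans)

lemma occ4_snoc: "occ4 (w@[y]) \<longleftrightarrow> occ4 w \<or> (\<exists>i1 i2 i3. i1<i2 \<and> i2<i3 \<and> i3 < length w \<and>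
      w!i2 < w!i1 \<and> w!i3 < w!i1 \<and> w!i3 < y)"
proof
  assume "occ4 (w@[y])"
  then obtain i1 i2 i3 i4 where h: "i1<i2" "i2<i3" "i3<i4" "i4 < length (w@[y])"
    "(w@[y])!i2 < (w@[y])!i1" "(w@[y])!i3 < (w@[y])!i1" "(w@[y])!i3 < (w@[y])!i4"
    unfolding occ4_def by blast
  have l: "i1 < length w" "i2 < length w" "i3 < length w" using h by auto
  have h2: "w!i2 < w!i1" "w!i3 < w!i1" using h l by (auto simp: nth_append)
  show "occ4 w \<or> (\<exists>i1 i2 i3. i1<i2 \<and> i2<i3 \<and> i3 < length w \<and>
      w!i2 < w!i1 \<and> w!i3 < w!i1 \<and> w!i3 < y)"
  proof (cases "i4 < length w")
    case True
    then have "w!i3 < w!i4" using h l by (auto simp: nth_append)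
    then have "occ4 w" unfolding occ4_def using h l h2 True by blast
    then show ?thesis by blast
  next
    case False
    then have "i4 = length w" using h by auto
    then have "w!i3 < y" using h l by (auto simp: nth_append)
    then show ?thesis using h l h2 by blast
  qed
next
  assume "occ4 w \<or> (\<exists>i1 i2 i3. i1<i2 \<and> i2<i3 \<and> i3 < length w \<and>
      w!i2 < w!i1 \<and> w!i3 < w!i1 \<and> w!i3 < y)"
  then show "occ4 (w@[y])"
  proof
    assume "occ4 w"
    then obtain i1 i2 i3 i4 where h: "i1<i2" "i2<i3" "i3<i4" "i4 < length w"
      "w!i2 < w!i1" "w!i3 < w!i1" "w!i3 < w!i4" unfolding occ4_def by blast
    have "(w@[y])!i1 = w!i1" "(w@[y])!i2 = w!i2" "(w@[y])!i3 = w!i3" "(w@[y])!i4 = w!i4"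
      using h by (auto simp: nth_append)
    then show ?thesis unfolding occ4_def using h
      by (metis (no_types, lifting) length_append_singleton less_Suc_eq)
  next
    assume "\<exists>i1 i2 i3. i1<i2 \<and> i2<i3 \<and> i3 < length w \<and> w!i2 < w!i1 \<and> w!i3 < w!i1 \<and> w!i3 < y"
    then obtain i1 i2 i3 where h: "i1<i2" "i2<i3" "i3 < length w"
      "w!i2 < w!i1" "w!i3 < w!i1" "w!i3 < y" by blast
    have "(w@[y])!i1 = w!i1" "(w@[y])!i2 = w!i2" "(w@[y])!i3 = w!i3" "(w@[y])!(length w) = y"
      using h by (auto simp: nth_append)
    moreover have "length w < length (w@[y])" by simp
    ultimately show ?thesis unfolding occ4_def using h by metis
  qed
qed

lemma last_conv: "w \<noteq> [] \<Longrightarrow> last w = w ! (length w - 1)"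
  by (simp add: last_conv_nth)

lemma occ4_snoc_less: assumes "w \<noteq> []" "y < last w" shows "occ4 (w@[y]) \<longleftrightarrow> occ4 w"
proof -
  have "occ4 w" if "i1<i2" "i2<i3" "i3 < length w" "w!i2 < w!i1" "w!i3 < w!i1" "w!i3 < y" for i1 i2 i3
  proof -
    have "i3 \<noteq> length w - 1" using that assms last_conv by fastforce
    then have "i3 < length w - 1" using that by auto
    moreover have "w!i3 < w!(length w - 1)" using that assms last_conv by fastforce
    ultimately show ?thesis unfolding occ4_def using that
      by (metis diff_less length_greater_0_conv assms(1) zero_less_one)
  qed
  then show ?thesis using occ4_snoc by blast
qed

lemma occ4_snoc_greater: assumes "w \<noteq> []" "last w < y" shows "occ4 (w@[y]) \<longleftrightarrow> occ3 w"
proof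
  assume "occ4 (w@[y])"
  then show "occ3 w" using occ4_snoc occ4_occ3 unfolding occ3_def by blast
next
  assume "occ3 w"
  then obtain i1 i2 i3 where h: "i1<i2" "i2<i3" "i3 < length w"
      "w!i2 < w!i1" "w!i3 < w!i1" unfolding occ3_def by blast
  show "occ4 (w@[y])"
  proof (cases "w!i3 < y")
    case True then show ?thesis using h occ4_snoc by blast
  next
    case False
    have "i3 \<noteq> length w - 1" using False assms last_conv by fastforce
    then have l: "i3 < length w - 1" using h by auto
    have "w!(length w - 1) < y" using assms last_conv by fastforce
    moreover have "w!(length w - 1) < w!i1" using False h assms last_conv by fastforce
    moreover have "i2 < length w - 1" "length w - 1 < length w" using l h assms by auto
    ultimately show ?thesis using h occ4_snoc by blast
  qed
qed

lemma occ3_Cons: "occ3 (x#w) \<longleftrightarrow> occ3 w \<or> (\<exists>i j. i<j \<and> j < length w \<and> w!i < x \<and> w!j < x)"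
proof
  assume "occ3 (x#w)"
  then obtain i1 i2 i3 where h: "i1<i2" "i2<i3" "i3 < length (x#w)"
      "(x#w)!i2 < (x#w)!i1" "(x#w)!i3 < (x#w)!i1" unfolding occ3_def by blast
  show "occ3 w \<or> (\<exists>i j. i<j \<and> j < length w \<and> w!i < x \<and> w!j < x)"
  proof (cases i1)
    case 0
    define a b where "a = i2 - 1" "b = i3 - 1"
    have ab: "i2 = Suc a" "i3 = Suc b" using h 0 unfolding a_b_def by auto
    then have "a < b \<and> b < length w \<and> w!a < x \<and> w!b < x" using h 0 by auto
    then show ?thesis by blast
  next
    case (Suc k)
    then have "occ3 w" unfolding occ3_def using h
      apply (rule_tac x=k in exI, rule_tac x="i2 - 1" in exI, rule_tac x="i3 - 1" in exI)
      by (auto simp: nth_Cons split: nat.splits)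
    then show ?thesis by blast
  qed
next
  assume "occ3 w \<or> (\<exists>i j. i<j \<and> j < length w \<and> w!i < x \<and> w!j < x)"
  then show "occ3 (x#w)"
  proof
    assume "occ3 w"
    then obtain i1 i2 i3 where h: "i1<i2" "i2<i3" "i3 < length w"
      "w!i2 < w!i1" "w!i3 < w!i1" unfolding occ3_def by blast
    then show ?thesis unfolding occ3_def
      by (rule_tac x="Suc i1" in exI, rule_tac x="Suc i2" in exI, rule_tac x="Suc i3" in exI) auto
  next
    assume "\<exists>i j. i<j \<and> j < length w \<and> w!i < x \<and> w!j < x"
    then obtain i j where h: "i<j" "j < length w" "w!i < x" "w!j < x" by blast
    then show ?thesis unfolding occ3_def
      by (rule_tac x="0" in exI, rule_tac x="Suc i" in exI, rule_tac x="Suc j" in exI) auto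
  qed
qed


lemma occ4_map: assumes f: "\<And>a b. f a < f b \<longleftrightarrow> a < b" shows "occ4 (map f w) \<longleftrightarrow> occ4 w"
proof
  assume "occ4 (map f w)"
  then obtain i1 i2 i3 i4 where h: "i1<i2" "i2<i3" "i3<i4" "i4 < length (map f w)"
      "(map f w)!i2 < (map f w)!i1" "(map f w)!i3 < (map f w)!i1" "(map f w)!i3 < (map f w)!i4"
    unfolding occ4_def by blast
  then have "w!i2 < w!i1" "w!i3 < w!i1" "w!i3 < w!i4" by (auto simp: f)
  then show "occ4 w" unfolding occ4_def using h by auto
next
  assume "occ4 w"
  then obtain i1 i2 i3 i4 where h: "i1<i2" "i2<i3" "i3<i4" "i4 < length w"
      "w!i2 < w!i1" "w!i3 < w!i1" "w!i3 < w!i4" unfolding occ4_def by blast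
  then have "(map f w)!i2 < (map f w)!i1" "(map f w)!i3 < (map f w)!i1" "(map f w)!i3 < (map f w)!i4"
    by (auto simp: f)
  then show "occ4 (map f w)" unfolding occ4_def using h by (metis length_map)
qed

lemma occ3_map: assumes f: "\<And>a b. f a < f b \<longleftrightarrow> a < b" shows "occ3 (map f w) \<longleftrightarrow> occ3 w"
proof
  assume "occ3 (map f w)"
  then obtain i1 i2 i3 where h: "i1<i2" "i2<i3" "i3 < length (map f w)"
      "(map f w)!i2 < (map f w)!i1" "(map f w)!i3 < (map f w)!i1"
    unfolding occ3_def by blast
  then have "w!i2 < w!i1" "w!i3 < w!i1" by (auto simp: f)
  then show "occ3 w" unfolding occ3_def using h by auto
next
  assume "occ3 w"
  then obtain i1 i2 i3 where h: "i1<i2" "i2<i3" "i3 < length w"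
      "w!i2 < w!i1" "w!i3 < w!i1" unfolding occ3_def by blast
  then have "(map f w)!i2 < (map f w)!i1" "(map f w)!i3 < (map f w)!i1"
    by (auto simp: f)
  then show "occ3 (map f w)" unfolding occ3_def using h by (metis length_map)
qed

definition sh :: "nat \<Rightarrow> nat \<Rightarrow> nat" where "sh y z = (if y \<le> z then Suc z else z)"
definition ush :: "nat \<Rightarrow> nat \<Rightarrow> nat" where "ush y z = (if y < z then z - 1 else z)"
definition ins :: "nat \<Rightarrow> nat list \<Rightarrow> nat list" where "ins y w = map (sh y) w"

lemma sh_mono: "sh y a < sh y b \<longleftrightarrow> a < b" unfolding sh_def by auto
lemma sh_inj: "inj (sh y)" unfolding inj_def sh_def by auto
lemma sh_ne: "sh y z \<noteq> y" unfolding sh_def by auto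
lemma sh_ush: "z \<noteq> y \<Longrightarrow> sh y (ush y z) = z" unfolding sh_def ush_def by auto

lemma occ4_ins: "occ4 (ins y w) \<longleftrightarrow> occ4 w" unfolding ins_def by (rule occ4_map[OF sh_mono])
lemma occ3_ins: "occ3 (ins y w) \<longleftrightarrow> occ3 w" unfolding ins_def by (rule occ3_map[OF sh_mono])

lemma perms_length: "w \<in> perms n \<Longrightarrow> length w = n"
  unfolding perms_def by (metis (mono_tags) card_atLeastAtMost diff_Suc_1 distinct_card mem_Collect_eq)

lemma finite_perms: "finite (perms n)"
proof -
  have "perms n \<subseteq> {xs. set xs \<subseteq> {1..n} \<and> length xs = n}"
    using perms_length unfolding perms_def by auto
  moreover have "finite {xs. set xs \<subseteq> {1..n} \<and> length xs = n}"
    by (rule finite_lists_length_eq) simp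
  ultimately show ?thesis by (rule finite_subset)
qed

lemma set_ins: assumes "set w = {1..n-1}" "1 \<le> y" "y \<le> n"
  shows "set (ins y w) = {1..n} - {y}"
proof -
  have "set (ins y w) = sh y ` {1..n-1}" unfolding ins_def using assms by simp
  also have "\<dots> = {1..n} - {y}"
  proof
    show "sh y ` {1..n-1} \<subseteq> {1..n} - {y}" using assms unfolding sh_def by auto
  next
    show "{1..n} - {y} \<subseteq> sh y ` {1..n-1}"
    proof
      fix v assume v: "v \<in> {1..n} - {y}"
      show "v \<in> sh y ` {1..n-1}"
      proof (cases "v < y")
        case True
        then have "sh y v = v" unfolding sh_def by auto
        moreover have "v \<in> {1..n-1}" using v True assms by auto
        ultimately show ?thesis by (metis image_eqI)
      next
        case False
        then have "v > y" using v by auto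
        then have "sh y (v-1) = v" unfolding sh_def by auto
        moreover have "v - 1 \<in> {1..n-1}" using v \<open>v > y\<close> assms by auto
        ultimately show ?thesis by (metis image_eqI)
      qed
    qed
  qed
  finally show ?thesis .
qed

lemma ins_snoc_perms: assumes "w \<in> perms (n-1)" "1 \<le> y" "y \<le> n"
  shows "ins y w @ [y] \<in> perms n" "y # ins y w \<in> perms n"
proof -
  have "inj_on (sh y) (set w)" using sh_inj by (metis inj_on_subset subset_UNIV)
  then have d: "distinct (ins y w)" using assms unfolding perms_def ins_def
    by (simp add: distinct_map)
  have s: "set (ins y w) = {1..n} - {y}" using set_ins assms unfolding perms_def by auto
  have ny: "y \<notin> set (ins y w)" using s by auto
  show "ins y w @ [y] \<in> perms n" using d s ny assms unfolding perms_def by auto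
  show "y # ins y w \<in> perms n" using d s ny assms unfolding perms_def by auto
qed

lemma ush_inj: "a \<noteq> y \<Longrightarrow> b \<noteq> y \<Longrightarrow> ush y a = ush y b \<Longrightarrow> a = b"
  unfolding ush_def by (cases "y < a"; cases "y < b"; simp)
lemma ush_range: "z \<in> {1..n} \<Longrightarrow> z \<noteq> y \<Longrightarrow> 1 \<le> y \<Longrightarrow> y \<le> n \<Longrightarrow> ush y z \<in> {1..n-1}"
  unfolding ush_def by (cases "y < z"; simp; arith)

lemma del_perms: assumes "distinct xs" "set xs = {1..n} - {y}" "1 \<le> y" "y \<le> n"
  shows "map (ush y) xs \<in> perms (n-1)" "ins y (map (ush y) xs) = xs"
proof -
  have ne: "\<forall>z\<in>set xs. z \<noteq> y" using assms by auto
  have "inj_on (ush y) (set xs)" unfolding inj_on_def using ne ush_inj by blast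
  then have d: "distinct (map (ush y) xs)" using assms by (simp add: distinct_map)
  have "set (map (ush y) xs) = ush y ` ({1..n} - {y})" using assms by simp
  also have "\<dots> = {1..n-1}"
  proof
    show "ush y ` ({1..n} - {y}) \<subseteq> {1..n-1}" using ush_range assms by blast
  next
    show "{1..n-1} \<subseteq> ush y ` ({1..n} - {y})"
    proof
      fix v assume v: "v \<in> {1..n-1}"
      show "v \<in> ush y ` ({1..n} - {y})"
      proof (cases "v < y")
        case True
        then have "ush y v = v" unfolding ush_def by simp
        moreover have "v \<in> {1..n} - {y}" using v True by (simp; arith)
        ultimately show ?thesis by (metis image_eqI)
      next
        case False
        then have "ush y (Suc v) = v" unfolding ush_def by simp
        moreover have "Suc v \<in> {1..n} - {y}" using v False by (simp; arith)
        ultimately show ?thesis by (metis image_eqI)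
      qed
    qed
  qed
  finally show "map (ush y) xs \<in> perms (n-1)" using d unfolding perms_def by simp
  have "\<forall>z\<in>set xs. sh y (ush y z) = z" using ne sh_ush by blast
  then show "ins y (map (ush y) xs) = xs" unfolding ins_def by (simp add: map_idI)
qed


lemma perms_ne: "w \<in> perms n \<Longrightarrow> 1 \<le> n \<Longrightarrow> w \<noteq> []"
  using perms_length by fastforce

lemma perms_last: "w \<in> perms n \<Longrightarrow> 1 \<le> n \<Longrightarrow> last w \<in> {1..n}"
proof -
  assume a: "w \<in> perms n" "1 \<le> n"
  then have "w \<noteq> []" by (rule perms_ne)
  then have "last w \<in> set w" by simp
  then show ?thesis using a(1) unfolding perms_def by simp
qed

lemma perms_hd: "w \<in> perms n \<Longrightarrow> 1 \<le> n \<Longrightarrow> hd w \<in> {1..n}"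
proof -
  assume a: "w \<in> perms n" "1 \<le> n"
  then have "w \<noteq> []" by (rule perms_ne)
  then have "hd w \<in> set w" by simp
  then show ?thesis using a(1) unfolding perms_def by simp
qed

lemma perms_snoc_split: assumes "\<pi> \<in> perms n" "last \<pi> = y" "1 \<le> n"
  shows "distinct (butlast \<pi>)" "set (butlast \<pi>) = {1..n} - {y}" "\<pi> = butlast \<pi> @ [y]"
proof -
  have ne: "\<pi> \<noteq> []" using perms_ne assms by blast
  then have e: "\<pi> = butlast \<pi> @ [y]" using assms(2) by (metis append_butlast_last_id)
  then show "\<pi> = butlast \<pi> @ [y]" .
  have d0: "distinct \<pi>" "set \<pi> = {1..n}" using assms(1) unfolding perms_def by auto
  have d: "distinct (butlast \<pi> @ [last \<pi>])" "set (butlast \<pi> @ [last \<pi>]) = {1..n}"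
    using d0 ne by simp_all
  then show "distinct (butlast \<pi>)" by simp
  show "set (butlast \<pi>) = {1..n} - {y}" using d assms(2) by auto
qed

lemma perms_cons_split: assumes "\<pi> \<in> perms n" "hd \<pi> = y" "1 \<le> n"
  shows "distinct (tl \<pi>)" "set (tl \<pi>) = {1..n} - {y}" "\<pi> = y # tl \<pi>"
proof -
  have ne: "\<pi> \<noteq> []" using perms_ne assms by blast
  then have e: "\<pi> = y # tl \<pi>" using assms(2) by (metis list.collapse)
  then show "\<pi> = y # tl \<pi>" .
  have d0: "distinct \<pi>" "set \<pi> = {1..n}" using assms(1) unfolding perms_def by auto
  have d: "distinct (hd \<pi> # tl \<pi>)" "set (hd \<pi> # tl \<pi>) = {1..n}"
    using d0 ne by simp_all
  then show "distinct (tl \<pi>)" by simp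
  show "set (tl \<pi>) = {1..n} - {y}" using d assms(2) by auto
qed

lemma ins_inj: "ins y w = ins y w' \<Longrightarrow> w = w'"
  unfolding ins_def using sh_inj by (metis inj_map_eq_map)

lemma card_snoc: assumes "1 \<le> y" "y \<le> n"
  shows "card {\<pi>\<in>perms n. last \<pi> = y \<and> P \<pi>} = card {w\<in>perms (n-1). P (ins y w @ [y])}"
proof -
  let ?f = "\<lambda>w. ins y w @ [y]"
  have inj: "inj_on ?f {w\<in>perms (n-1). P (ins y w @ [y])}"
    unfolding inj_on_def using ins_inj by blast
  have "?f ` {w\<in>perms (n-1). P (ins y w @ [y])} = {\<pi>\<in>perms n. last \<pi> = y \<and> P \<pi>}"
  proof
    show "?f ` {w\<in>perms (n-1). P (ins y w @ [y])} \<subseteq> {\<pi>\<in>perms n. last \<pi> = y \<and> P \<pi>}"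
    proof
      fix \<pi> assume "\<pi> \<in> ?f ` {w\<in>perms (n-1). P (ins y w @ [y])}"
      then obtain w where w: "w \<in> perms (n-1)" "P (?f w)" "\<pi> = ?f w" by blast
      have "?f w \<in> perms n" using ins_snoc_perms(1)[OF w(1) assms] .
      moreover have "last (?f w) = y" by simp
      ultimately show "\<pi> \<in> {\<pi>\<in>perms n. last \<pi> = y \<and> P \<pi>}" using w(2,3) by blast
    qed
  next
    show "{\<pi>\<in>perms n. last \<pi> = y \<and> P \<pi>} \<subseteq> ?f ` {w\<in>perms (n-1). P (ins y w @ [y])}"
    proof
      fix \<pi> assume "\<pi> \<in> {\<pi>\<in>perms n. last \<pi> = y \<and> P \<pi>}"
      then have h: "\<pi> \<in> perms n" "last \<pi> = y" "P \<pi>" by auto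
      have n1: "1 \<le> n" using assms by simp
      note sp = perms_snoc_split[OF h(1) h(2) n1]
      note dp = del_perms[OF sp(1) sp(2) assms]
      have "\<pi> = ?f (map (ush y) (butlast \<pi>))" using dp(2) sp(3) by simp
      moreover have "map (ush y) (butlast \<pi>) \<in> {w\<in>perms (n-1). P (ins y w @ [y])}"
        using dp h(3) sp(3) by simp
      ultimately show "\<pi> \<in> ?f ` {w\<in>perms (n-1). P (ins y w @ [y])}" by blast
    qed
  qed
  then show ?thesis using card_image[OF inj] by simp
qed

lemma card_cons: assumes "1 \<le> y" "y \<le> n"
  shows "card {\<pi>\<in>perms n. hd \<pi> = y \<and> P \<pi>} = card {w\<in>perms (n-1). P (y # ins y w)}"
proof -
  let ?f = "\<lambda>w. y # ins y w"
  have inj: "inj_on ?f {w\<in>perms (n-1). P (y # ins y w)}"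
    unfolding inj_on_def using ins_inj by blast
  have "?f ` {w\<in>perms (n-1). P (y # ins y w)} = {\<pi>\<in>perms n. hd \<pi> = y \<and> P \<pi>}"
  proof
    show "?f ` {w\<in>perms (n-1). P (y # ins y w)} \<subseteq> {\<pi>\<in>perms n. hd \<pi> = y \<and> P \<pi>}"
    proof
      fix \<pi> assume "\<pi> \<in> ?f ` {w\<in>perms (n-1). P (y # ins y w)}"
      then obtain w where w: "w \<in> perms (n-1)" "P (?f w)" "\<pi> = ?f w" by blast
      have "?f w \<in> perms n" using ins_snoc_perms(2)[OF w(1) assms] .
      moreover have "hd (?f w) = y" by simp
      ultimately show "\<pi> \<in> {\<pi>\<in>perms n. hd \<pi> = y \<and> P \<pi>}" using w(2,3) by blast
    qed
  next
    show "{\<pi>\<in>perms n. hd \<pi> = y \<and> P \<pi>} \<subseteq> ?f ` {w\<in>perms (n-1). P (y # ins y w)}"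
    proof
      fix \<pi> assume "\<pi> \<in> {\<pi>\<in>perms n. hd \<pi> = y \<and> P \<pi>}"
      then have h: "\<pi> \<in> perms n" "hd \<pi> = y" "P \<pi>" by auto
      have n1: "1 \<le> n" using assms by simp
      note sp = perms_cons_split[OF h(1) h(2) n1]
      note dp = del_perms[OF sp(1) sp(2) assms]
      have "\<pi> = ?f (map (ush y) (tl \<pi>))" using dp(2) sp(3) by simp
      moreover have "map (ush y) (tl \<pi>) \<in> {w\<in>perms (n-1). P (y # ins y w)}"
        using dp h(3) sp(3) by simp
      ultimately show "\<pi> \<in> ?f ` {w\<in>perms (n-1). P (y # ins y w)}" by blast
    qed
  qed
  then show ?thesis using card_image[OF inj] by simp
qed


lemma finite_perms_sub: "finite {\<pi>\<in>perms n. P \<pi>}"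
  using finite_perms by simp

lemma perms_0: "perms 0 = {[]}"
  unfolding perms_def by auto

lemma perms_1: "perms 1 = {[1]}"
proof
  show "perms 1 \<subseteq> {[1]}"
  proof
    fix w assume w: "w \<in> perms 1"
    then have "length w = 1" by (rule perms_length)
    then obtain a where a: "w = [a]" by (metis One_nat_def length_0_conv length_Suc_conv)
    then have "a = 1" using w unfolding perms_def by auto
    then show "w \<in> {[1]}" using a by simp
  qed
next
  show "{[1]} \<subseteq> perms 1" unfolding perms_def by auto
qed

lemma last_ins: "w \<noteq> [] \<Longrightarrow> last (ins y w) = sh y (last w)"
  unfolding ins_def by (simp add: last_map)

definition GA :: "nat \<Rightarrow> nat \<Rightarrow> nat" where
  "GA n y = card {\<pi>\<in>perms n. \<not> occ4 \<pi> \<and> y \<le> last \<pi>}"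
definition G3 :: "nat \<Rightarrow> nat \<Rightarrow> nat" where
  "G3 n y = card {\<pi>\<in>perms n. \<not> occ3 \<pi> \<and> last \<pi> < y}"

lemma R1: assumes "2 \<le> n" "1 \<le> y" "y \<le> n"
  shows "card {\<pi>\<in>perms n. last \<pi> = y \<and> \<not> occ4 \<pi>} = GA (n-1) y + G3 (n-1) y"
proof -
  have "card {\<pi>\<in>perms n. last \<pi> = y \<and> \<not> occ4 \<pi>} = card {w\<in>perms (n-1). \<not> occ4 (ins y w @ [y])}"
    by (rule card_snoc[OF assms(2,3)])
  also have "{w\<in>perms (n-1). \<not> occ4 (ins y w @ [y])} =
     {w\<in>perms (n-1). \<not> occ4 w \<and> y \<le> last w} \<union> {w\<in>perms (n-1). \<not> occ3 w \<and> last w < y}"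
  proof (rule set_eqI)
    fix w
    show "w \<in> {w\<in>perms (n-1). \<not> occ4 (ins y w @ [y])} \<longleftrightarrow>
      w \<in> {w\<in>perms (n-1). \<not> occ4 w \<and> y \<le> last w} \<union> {w\<in>perms (n-1). \<not> occ3 w \<and> last w < y}"
    proof (cases "w \<in> perms (n-1)")
      case False then show ?thesis by simp
    next
      case True
      then have ne: "w \<noteq> []" using perms_ne assms by simp
      then have ne2: "ins y w \<noteq> []" unfolding ins_def by simp
      have l: "last (ins y w) = sh y (last w)" using last_ins ne by simp
      show ?thesis
      proof (cases "y \<le> last w")
        case True
        then have "y < last (ins y w)" using l unfolding sh_def by simp
        then have "occ4 (ins y w @ [y]) \<longleftrightarrow> occ4 w" using occ4_snoc_less[OF ne2] occ4_ins by simp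
        then show ?thesis using True \<open>w \<in> perms (n-1)\<close> by auto
      next
        case False
        then have "last (ins y w) < y" using l unfolding sh_def by simp
        then have "occ4 (ins y w @ [y]) \<longleftrightarrow> occ3 w" using occ4_snoc_greater[OF ne2] occ3_ins by simp
        then show ?thesis using False \<open>w \<in> perms (n-1)\<close> by auto
      qed
    qed
  qed
  also have "card ({w\<in>perms (n-1). \<not> occ4 w \<and> y \<le> last w} \<union> {w\<in>perms (n-1). \<not> occ3 w \<and> last w < y})
      = GA (n-1) y + G3 (n-1) y"
    unfolding GA_def G3_def by (rule card_Un_disjoint) (auto simp: finite_perms_sub)
  finally show ?thesis .
qed

lemma GA_split: "GA n y = card {\<pi>\<in>perms n. last \<pi> = y \<and> \<not> occ4 \<pi>} + GA n (Suc y)"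
proof -
  have "{\<pi>\<in>perms n. \<not> occ4 \<pi> \<and> y \<le> last \<pi>} =
    {\<pi>\<in>perms n. last \<pi> = y \<and> \<not> occ4 \<pi>} \<union> {\<pi>\<in>perms n. \<not> occ4 \<pi> \<and> Suc y \<le> last \<pi>}" by auto
  then show ?thesis unfolding GA_def
    by (simp add: card_Un_disjoint finite_perms_sub disjoint_iff)
qed

lemma GA_zero: assumes "1 \<le> n" "n < y" shows "GA n y = 0"
proof -
  have "{\<pi>\<in>perms n. \<not> occ4 \<pi> \<and> y \<le> last \<pi>} = {}" using perms_last assms by fastforce
  then show ?thesis unfolding GA_def by (metis card.empty)
qed

lemma GA_one: assumes "1 \<le> n" shows "GA n 1 = card {\<pi>\<in>perms n. \<not> occ4 \<pi>}"
proof -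
  have "{\<pi>\<in>perms n. \<not> occ4 \<pi> \<and> 1 \<le> last \<pi>} = {\<pi>\<in>perms n. \<not> occ4 \<pi>}" using perms_last assms by fastforce
  then show ?thesis unfolding GA_def by simp
qed

lemma G3_le1: assumes "1 \<le> n" "y \<le> 1" shows "G3 n y = 0"
proof -
  have "{\<pi>\<in>perms n. \<not> occ3 \<pi> \<and> last \<pi> < y} = {}" using perms_last assms by fastforce
  then show ?thesis unfolding G3_def by (metis card.empty)
qed


lemma ins_props: assumes "w \<in> perms (m-1)" "1 \<le> x" "x \<le> m"
  shows "distinct (ins x w)" "set (ins x w) = {1..m} - {x}"
proof -
  have "x # ins x w \<in> perms m" by (rule ins_snoc_perms(2)[OF assms])
  then have d: "distinct (x # ins x w)" "set (x # ins x w) = {1..m}" unfolding perms_def by auto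
  then show "distinct (ins x w)" by simp
  show "set (ins x w) = {1..m} - {x}" using d by auto
qed

lemma hd_le2: assumes "\<pi> \<in> perms m" "\<not> occ3 \<pi>" "1 \<le> m" shows "hd \<pi> \<le> 2"
proof (rule ccontr)
  assume "\<not> hd \<pi> \<le> 2"
  then have x3: "hd \<pi> \<ge> 3" by simp
  note sp = perms_cons_split[OF assms(1) refl assms(3)]
  have "hd \<pi> \<le> m" using perms_hd assms by fastforce
  then have "1 \<in> set (tl \<pi>)" "2 \<in> set (tl \<pi>)" using sp(2) x3 by auto
  then obtain i j where ij: "i < length (tl \<pi>)" "tl \<pi> ! i = 1" "j < length (tl \<pi>)" "tl \<pi> ! j = 2"
    by (metis in_set_conv_nth)
  have "i \<noteq> j" using ij by auto
  then have "\<exists>i j. i<j \<and> j < length (tl \<pi>) \<and> tl \<pi>!i < hd \<pi> \<and> tl \<pi>!j < hd \<pi>"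
  proof (cases "i < j")
    case True then show ?thesis using ij x3 by (intro exI[of _ i] exI[of _ j]) auto
  next
    case False then have "j < i" using \<open>i \<noteq> j\<close> by simp
    then show ?thesis using ij x3 by (intro exI[of _ j] exI[of _ i]) auto
  qed
  then have "occ3 (hd \<pi> # tl \<pi>)" using occ3_Cons by blast
  then show False using assms(2) sp(3) by simp
qed

lemma card_cong: "(\<And>w. w \<in> perms k \<Longrightarrow> P w \<longleftrightarrow> Q w) \<Longrightarrow> card {w\<in>perms k. P w} = card {w\<in>perms k. Q w}"
  by (metis (mono_tags, lifting) Collect_cong)

lemma G3_rec: assumes "2 \<le> m" "2 \<le> y"
  shows "G3 m y = G3 (m-1) (y-1) + (if y = 2 then G3 (m-1) 2 else G3 (m-1) (y-1))"
proof -
  have m1: "1 \<le> m" using assms by simp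
  have "{\<pi>\<in>perms m. \<not> occ3 \<pi> \<and> last \<pi> < y} =
    {\<pi>\<in>perms m. hd \<pi> = 1 \<and> (\<not> occ3 \<pi> \<and> last \<pi> < y)} \<union> {\<pi>\<in>perms m. hd \<pi> = 2 \<and> (\<not> occ3 \<pi> \<and> last \<pi> < y)}"
  proof (rule set_eqI)
    fix \<pi>
    show "\<pi> \<in> {\<pi>\<in>perms m. \<not> occ3 \<pi> \<and> last \<pi> < y} \<longleftrightarrow> \<pi> \<in>
    {\<pi>\<in>perms m. hd \<pi> = 1 \<and> (\<not> occ3 \<pi> \<and> last \<pi> < y)} \<union> {\<pi>\<in>perms m. hd \<pi> = 2 \<and> (\<not> occ3 \<pi> \<and> last \<pi> < y)}"
    proof
      assume h: "\<pi> \<in> {\<pi>\<in>perms m. \<not> occ3 \<pi> \<and> last \<pi> < y}"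
      then have "hd \<pi> \<le> 2" "hd \<pi> \<ge> 1" using hd_le2 perms_hd m1 by fastforce+
      then have "hd \<pi> = 1 \<or> hd \<pi> = 2" by auto
      then show "\<pi> \<in> {\<pi>\<in>perms m. hd \<pi> = 1 \<and> (\<not> occ3 \<pi> \<and> last \<pi> < y)} \<union> {\<pi>\<in>perms m. hd \<pi> = 2 \<and> (\<not> occ3 \<pi> \<and> last \<pi> < y)}"
        using h by auto
    qed auto
  qed
  then have "G3 m y = card {\<pi>\<in>perms m. hd \<pi> = 1 \<and> (\<not> occ3 \<pi> \<and> last \<pi> < y)} + card {\<pi>\<in>perms m. hd \<pi> = 2 \<and> (\<not> occ3 \<pi> \<and> last \<pi> < y)}"
    unfolding G3_def by (simp add: card_Un_disjoint finite_perms_sub disjoint_iff)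
  also have "card {\<pi>\<in>perms m. hd \<pi> = 1 \<and> (\<not> occ3 \<pi> \<and> last \<pi> < y)} =
      card {w\<in>perms (m-1). \<not> occ3 (1 # ins 1 w) \<and> last (1 # ins 1 w) < y}"
    by (rule card_cons) (use m1 in auto)
  also have "\<dots> = G3 (m-1) (y-1)" unfolding G3_def
  proof (rule card_cong)
    fix w assume w: "w \<in> perms (m-1)"
    have ne: "w \<noteq> []" using perms_ne w assms by simp
    then have ne2: "ins 1 w \<noteq> []" unfolding ins_def by simp
    have ip: "set (ins 1 w) = {1..m} - {1}" using ins_props[OF w _ m1] by simp
    have "\<not> (\<exists>i j. i<j \<and> j < length (ins 1 w) \<and> ins 1 w!i < 1 \<and> ins 1 w!j < 1)"
    proof
      assume "\<exists>i j. i<j \<and> j < length (ins 1 w) \<and> ins 1 w!i < 1 \<and> ins 1 w!j < 1"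
      then obtain i j where "i<j" "j < length (ins 1 w)" "ins 1 w!i < 1" by blast
      then have "i < length (ins 1 w)" by simp
      then have "ins 1 w ! i \<in> set (ins 1 w)" by (rule nth_mem)
      then show False using ip \<open>ins 1 w!i < 1\<close> by auto
    qed
    then have o: "occ3 (1 # ins 1 w) \<longleftrightarrow> occ3 w" using occ3_Cons occ3_ins by blast
    have "last w \<ge> 1" using perms_last w assms by fastforce
    then have "last (1 # ins 1 w) = Suc (last w)" using ne2 last_ins[OF ne] unfolding sh_def by simp
    then show "(\<not> occ3 (1 # ins 1 w) \<and> last (1 # ins 1 w) < y) \<longleftrightarrow> (\<not> occ3 w \<and> last w < y - 1)"
      using o by auto
  qed
  also have "card {\<pi>\<in>perms m. hd \<pi> = 2 \<and> (\<not> occ3 \<pi> \<and> last \<pi> < y)} =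
      card {w\<in>perms (m-1). \<not> occ3 (2 # ins 2 w) \<and> last (2 # ins 2 w) < y}"
    by (rule card_cons) (use assms in auto)
  also have "\<dots> = (if y = 2 then G3 (m-1) 2 else G3 (m-1) (y-1))" unfolding G3_def
  proof (cases "y = 2")
    case True
    show "card {w\<in>perms (m-1). \<not> occ3 (2 # ins 2 w) \<and> last (2 # ins 2 w) < y} =
      (if y = 2 then card {\<pi> \<in> perms (m - 1). \<not> occ3 \<pi> \<and> last \<pi> < 2} else card {\<pi> \<in> perms (m - 1). \<not> occ3 \<pi> \<and> last \<pi> < y - 1})"
      unfolding if_P[OF True]
    proof (rule card_cong)
      fix w assume w: "w \<in> perms (m-1)"
      have ne: "w \<noteq> []" using perms_ne w assms by simp
      then have ne2: "ins 2 w \<noteq> []" unfolding ins_def by simp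
      have ip: "set (ins 2 w) = {1..m} - {2}" "distinct (ins 2 w)" using ins_props[OF w _ assms(1)] by simp_all
      have "\<not> (\<exists>i j. i<j \<and> j < length (ins 2 w) \<and> ins 2 w!i < 2 \<and> ins 2 w!j < 2)"
      proof
        assume "\<exists>i j. i<j \<and> j < length (ins 2 w) \<and> ins 2 w!i < 2 \<and> ins 2 w!j < 2"
        then obtain i j where ij: "i<j" "j < length (ins 2 w)" "ins 2 w!i < 2" "ins 2 w!j < 2" by blast
        then have "i < length (ins 2 w)" by simp
        then have "ins 2 w ! i \<in> set (ins 2 w)" "ins 2 w ! j \<in> set (ins 2 w)" using ij(2) by (simp_all only: nth_mem)
        then have "ins 2 w ! i = 1" "ins 2 w ! j = 1" using ip ij by auto
        then have "i = j" using ip(2) ij nth_eq_iff_index_eq by (metis order.strict_trans)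
        then show False using ij by simp
      qed
      then have o: "occ3 (2 # ins 2 w) \<longleftrightarrow> occ3 w" using occ3_Cons occ3_ins by blast
      have "last w \<ge> 1" using perms_last w assms by fastforce
      then have "last (2 # ins 2 w) = sh 2 (last w)" using ne2 last_ins[OF ne] by simp
      then have "last (2 # ins 2 w) < 2 \<longleftrightarrow> last w < 2" unfolding sh_def by simp
      then show "(\<not> occ3 (2 # ins 2 w) \<and> last (2 # ins 2 w) < y) \<longleftrightarrow> (\<not> occ3 w \<and> last w < 2)"
        using o True by auto
    qed
  next
    case False
    then have y3: "3 \<le> y" using assms by simp
    show "card {w\<in>perms (m-1). \<not> occ3 (2 # ins 2 w) \<and> last (2 # ins 2 w) < y} =
      (if y = 2 then card {\<pi> \<in> perms (m - 1). \<not> occ3 \<pi> \<and> last \<pi> < 2} else card {\<pi> \<in> perms (m - 1). \<not> occ3 \<pi> \<and> last \<pi> < y - 1})"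
      unfolding if_not_P[OF False]
    proof (rule card_cong)
      fix w assume w: "w \<in> perms (m-1)"
      have ne: "w \<noteq> []" using perms_ne w assms by simp
      then have ne2: "ins 2 w \<noteq> []" unfolding ins_def by simp
      have ip: "set (ins 2 w) = {1..m} - {2}" "distinct (ins 2 w)" using ins_props[OF w _ assms(1)] by simp_all
      have "\<not> (\<exists>i j. i<j \<and> j < length (ins 2 w) \<and> ins 2 w!i < 2 \<and> ins 2 w!j < 2)"
      proof
        assume "\<exists>i j. i<j \<and> j < length (ins 2 w) \<and> ins 2 w!i < 2 \<and> ins 2 w!j < 2"
        then obtain i j where ij: "i<j" "j < length (ins 2 w)" "ins 2 w!i < 2" "ins 2 w!j < 2" by blast
        then have "i < length (ins 2 w)" by simp
        then have "ins 2 w ! i \<in> set (ins 2 w)" "ins 2 w ! j \<in> set (ins 2 w)" using ij(2) by (simp_all only: nth_mem)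
        then have "ins 2 w ! i = 1" "ins 2 w ! j = 1" using ip ij by auto
        then have "i = j" using ip(2) ij nth_eq_iff_index_eq by (metis order.strict_trans)
        then show False using ij by simp
      qed
      then have o: "occ3 (2 # ins 2 w) \<longleftrightarrow> occ3 w" using occ3_Cons occ3_ins by blast
      have l1: "last w \<ge> 1" using perms_last w assms by fastforce
      have "last (2 # ins 2 w) = sh 2 (last w)" using ne2 last_ins[OF ne] by simp
      then have "last (2 # ins 2 w) < y \<longleftrightarrow> last w < y - 1" using l1 y3 unfolding sh_def by auto
      then show "(\<not> occ3 (2 # ins 2 w) \<and> last (2 # ins 2 w) < y) \<longleftrightarrow> (\<not> occ3 w \<and> last w < y - 1)"
        using o by auto
    qed
  qed
  finally show ?thesis .
qed


lemma G3_closed: "1 \<le> m \<Longrightarrow> 2 \<le> y \<Longrightarrow> y \<le> m+1 \<Longrightarrow> G3 m y = 2^(y-2)"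
proof (induction m arbitrary: y)
  case 0 then show ?case by simp
next
  case (Suc k)
  show ?case
  proof (cases "k = 0")
    case True
    then have y2: "y = 2" using Suc.prems by linarith
    have "\<not> occ3 [1]" unfolding occ3_def by clarsimp
    then have "{\<pi>\<in>perms 1. \<not> occ3 \<pi> \<and> last \<pi> < 2} = {[1]}" unfolding perms_1 by auto
    then have "G3 1 2 = 1" unfolding G3_def by simp
    then show ?thesis using True y2 by simp
  next
    case False
    then have k1: "1 \<le> k" by simp
    have rec: "G3 (Suc k) y = G3 k (y-1) + (if y = 2 then G3 k 2 else G3 k (y-1))"
      using G3_rec[of "Suc k" y] Suc.prems k1 by simp
    show ?thesis
    proof (cases "y = 2")
      case True
      then have "G3 (Suc k) y = G3 k 1 + G3 k 2" using rec by simp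
      moreover have "G3 k 1 = 0" using G3_le1 k1 by simp
      moreover have "G3 k 2 = 1" using Suc.IH[of 2] k1 by simp
      ultimately show ?thesis using True by simp
    next
      case False
      then have "G3 (Suc k) y = 2 * G3 k (y-1)" using rec by simp
      moreover have "G3 k (y-1) = 2^(y-1-2)" using Suc.IH[of "y-1"] k1 Suc.prems False by simp
      moreover have "2 * (2::nat)^(y-1-2) = 2^(y-2)" using Suc.prems False
        by (metis (no_types, lifting) Suc_diff_Suc diff_Suc_1 diff_diff_left le_neq_implies_less
            numeral_2_eq_2 power_Suc one_add_one)
      ultimately show ?thesis by simp
    qed
  qed
qed

lemma arith1: fixes A B P T :: nat
  assumes "4*A + 2*P = 2*P*T" "4*B + 4*P = 4*P*T"
  shows "4*(A + P + B) + 2*P = 2*P*(3*T)"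
  using assms by (simp add: algebra_simps)

lemma GA_closed: "1 \<le> n \<Longrightarrow> 2 \<le> y \<Longrightarrow> y \<le> n+1 \<Longrightarrow> 4 * GA n y + 2^(y-1) = 2^(y-1) * 3^(n+1-y)"
proof (induction n arbitrary: y)
  case 0 then show ?case by simp
next
  case (Suc k)
  note oIH = Suc.IH
  note oprems = Suc.prems
  let ?n = "Suc k"
  show ?case
  proof (cases "k = 0")
    case True
    then have "y = 2" using Suc.prems by simp
    then show ?thesis using GA_zero[of 1 2] True by simp
  next
    case False
    then have k1: "1 \<le> k" by simp
    have main: "\<forall>y. y + d = ?n + 1 \<longrightarrow> 2 \<le> y \<longrightarrow> 4 * GA ?n y + 2^(y-1) = 2^(y-1) * 3^(?n+1-y)" for d
    proof (induction d)
      case 0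
      show ?case
      proof (intro allI impI)
        fix y assume y: "y + 0 = ?n + 1" "2 \<le> y"
        then have "GA ?n y = 0" using GA_zero[of ?n y] by simp
        then show "4 * GA ?n y + 2^(y-1) = 2^(y-1) * 3^(?n+1-y)" using y by simp
      qed
    next
      case (Suc d)
      show ?case
      proof (intro allI impI)
        fix y assume y: "y + Suc d = ?n + 1" "2 \<le> y"
        have inner: "4 * GA ?n (Suc y) + 2^(Suc y-1) = 2^(Suc y-1) * 3^(?n+1-Suc y)"
        proof -
          have "Suc y + d = ?n + 1" using y by simp
          moreover have "2 \<le> Suc y" using y by simp
          moreover have "Suc y + d = ?n + 1 \<longrightarrow> 2 \<le> Suc y \<longrightarrow> 4 * GA ?n (Suc y) + 2^(Suc y-1) = 2^(Suc y-1) * 3^(?n+1-Suc y)"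
            using Suc.IH by blast
          ultimately show ?thesis by blast
        qed
        have split: "GA ?n y = GA k y + G3 k y + GA ?n (Suc y)"
          using GA_split[of ?n y] R1[of ?n y] y k1 by simp
        have outer: "4 * GA k y + 2^(y-1) = 2^(y-1) * 3^(k+1-y)"
          using oIH[of y] y k1 by simp
        have g3: "G3 k y = 2^(y-2)" using G3_closed[of k y] y k1 by simp
        obtain j where j: "y = Suc (Suc j)" using y(2) by (metis add_2_eq_Suc le_Suc_ex)
        define e where "e = k + 1 - y"
        have e1: "?n + 1 - y = Suc e" "?n + 1 - Suc y = e" using y unfolding e_def by auto
        have p: "(2::nat)^(y-1) = 2*2^j" "(2::nat)^(Suc y - 1) = 4*2^j" "(2::nat)^(y-2) = 2^j" using j by simp_all
        have A: "4 * GA k y + 2*2^j = 2*2^j*3^e" using outer p unfolding e_def by simp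
        have B: "4 * GA ?n (Suc y) + 4*2^j = 4*2^j*3^e" using inner p e1 by simp
        have "4 * (GA k y + 2^j + GA ?n (Suc y)) + 2*2^j = 2*2^j*(3*3^e)"
          by (rule arith1[OF A B])
        then show "4 * GA ?n y + 2^(y-1) = 2^(y-1) * 3^(?n+1-y)" using split g3 p e1 by simp
      qed
    qed
    have "y + (?n + 1 - y) = ?n + 1" using Suc.prems by simp
    then show ?thesis using main[of "?n + 1 - y"] oprems by blast
  qed
qed

definition AV :: "nat \<Rightarrow> nat" where "AV n = card {\<pi>\<in>perms n. \<not> occ4 \<pi>}"

lemma AV_closed: "4 * AV n + 2 * n = 3^n + 3"
proof (induction n rule: less_induct)
  case (less n)
  show ?case
  proof (cases "n \<le> 1")
    case True
    then have "n = 0 \<or> n = 1" by auto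
    moreover have "\<not> occ4 []" "\<not> occ4 [1]" unfolding occ4_def by clarsimp+
    moreover have "AV 0 = 1"
    proof -
      have "{\<pi>\<in>perms 0. \<not> occ4 \<pi>} = {[]}" unfolding perms_0 using \<open>\<not> occ4 []\<close> by auto
      then show ?thesis unfolding AV_def by simp
    qed
    moreover have "AV 1 = 1"
    proof -
      have "{\<pi>\<in>perms 1. \<not> occ4 \<pi>} = {[1]}" unfolding perms_1 using \<open>\<not> occ4 [1]\<close> by auto
      then show ?thesis unfolding AV_def by simp
    qed
    ultimately show ?thesis by auto
  next
    case False
    then have n2: "2 \<le> n" by simp
    have "AV n = GA n 1" using GA_one n2 unfolding AV_def by simp
    also have "\<dots> = GA (n-1) 1 + G3 (n-1) 1 + GA n 2"
      using GA_split[of n 1] R1[of n 1] n2 by (simp add: numeral_2_eq_2)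
    also have "GA (n-1) 1 = AV (n-1)" using GA_one n2 unfolding AV_def by simp
    also have "G3 (n-1) 1 = 0" using G3_le1 n2 by simp
    finally have e: "AV n = AV (n-1) + GA n 2" by simp
    have g: "4 * GA n 2 + 2 = 2 * 3^(n-1)" using GA_closed[of n 2] n2 by simp
    have ih: "4 * AV (n-1) + 2 * (n-1) = 3^(n-1) + 3" using less.IH n2 by simp
    have "(3::nat)^n = 3 * 3^(n-1)" using n2 by (metis Suc_diff_1 not_numeral_le_zero not_gr0 power_Suc)
    then show ?thesis using e g ih n2 by simp
  qed
qed


lemma all4: "(\<forall>a<(4::nat). P a) \<longleftrightarrow> P 0 \<and> P 1 \<and> P 2 \<and> P 3"
proof
  assume "P 0 \<and> P 1 \<and> P 2 \<and> P 3"
  then show "\<forall>a<(4::nat). P a" by (auto simp: less_Suc_eq numeral_eq_Suc)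
qed simp

lemma nth4: "x < 4 \<Longrightarrow> [f 0, f 1, f 2, f (3::nat)] ! x = f x"
  using all4[of "\<lambda>x. [f 0, f 1, f 2, f (3::nat)] ! x = f x"] by (simp add: numeral_eq_Suc)

lemma cc4: "contains_classical w q \<longleftrightarrow> (\<exists>i1 i2 i3 i4. i1<i2 \<and> i2<i3 \<and> i3<i4 \<and> i4 < length w \<and>
   (\<forall>x<4. \<forall>y<4. [w!i1,w!i2,w!i3,w!i4]!x < [w!i1,w!i2,w!i3,w!i4]!y \<longleftrightarrow> q!x < q!y))" if lq: "length q = 4"
proof
  assume "contains_classical w q"
  then obtain i where i: "strict_mono_on {0..<4} i" "\<forall>a<4. i a < length w"
    "\<forall>a<4. \<forall>b<4. w ! (i a) < w ! (i b) \<longleftrightarrow> q ! a < q ! b"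
    unfolding contains_classical_def lq by blast
  have m: "i 0 < i 1" "i 1 < i 2" "i 2 < i 3" using strict_mono_onD[OF i(1)] by auto
  have l: "i 3 < length w" using i(2) by simp
  have "\<forall>x<4. [w!i 0,w!i 1,w!i 2,w!i 3]!x = w!(i x)"
    using nth4[of _ "\<lambda>x. w!(i x)"] by blast
  then have "\<forall>x<4. \<forall>y<4. [w!i 0,w!i 1,w!i 2,w!i 3]!x < [w!i 0,w!i 1,w!i 2,w!i 3]!y \<longleftrightarrow> q!x < q!y"
    using i(3) by simp
  then show "\<exists>i1 i2 i3 i4. i1<i2 \<and> i2<i3 \<and> i3<i4 \<and> i4 < length w \<and>
   (\<forall>x<4. \<forall>y<4. [w!i1,w!i2,w!i3,w!i4]!x < [w!i1,w!i2,w!i3,w!i4]!y \<longleftrightarrow> q!x < q!y)"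
    using m l by blast
next
  assume "\<exists>i1 i2 i3 i4. i1<i2 \<and> i2<i3 \<and> i3<i4 \<and> i4 < length w \<and>
   (\<forall>x<4. \<forall>y<4. [w!i1,w!i2,w!i3,w!i4]!x < [w!i1,w!i2,w!i3,w!i4]!y \<longleftrightarrow> q!x < q!y)"
  then obtain i1 i2 i3 i4 where h: "i1<i2" "i2<i3" "i3<i4" "i4 < length w"
   "\<forall>x<4. \<forall>y<4. [w!i1,w!i2,w!i3,w!i4]!x < [w!i1,w!i2,w!i3,w!i4]!y \<longleftrightarrow> q!x < q!y" by blast
  define i where "i = (\<lambda>x. [i1,i2,i3,i4]!x)"
  have iv: "i 0 = i1" "i 1 = i2" "i 2 = i3" "i 3 = i4" unfolding i_def by (simp_all add: numeral_eq_Suc)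
  have "\<forall>x<4. [w!i1,w!i2,w!i3,w!i4]!x = w!(i x)"
    using nth4[of _ "\<lambda>x. w!(i x)"] iv by auto
  then have c: "\<forall>a<4. \<forall>b<4. w ! (i a) < w ! (i b) \<longleftrightarrow> q ! a < q ! b" using h(5) by simp
  have "\<forall>a<4. i a < length w" unfolding all4 using iv h by simp
  moreover have "strict_mono_on {0..<4} i"
  proof (rule strict_mono_onI)
    fix r s :: nat assume rs: "r \<in> {0..<4}" "s \<in> {0..<4}" "r < s"
    then have "r < 4" "s < 4" by auto
    then show "i r < i s" using rs(3) iv h(1-3)
      by (auto simp: less_Suc_eq numeral_eq_Suc)
  qed
  ultimately show "contains_classical w q" unfolding contains_classical_def lq using c by blast
qed

lemma pop_occ4: "contains_pop w 4 {(1,2),(1,3),(4,3)} \<longleftrightarrow> occ4 w"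
proof
  assume "contains_pop w 4 {(1,2),(1,3),(4,3)}"
  then obtain i where i: "strict_mono_on {1..4} i" "\<forall>x\<in>{1..4}. i x < length w"
     "\<forall>(x,y)\<in>{(1::nat,2::nat),(1,3),(4,3)}. w ! (i x) > w ! (i y)"
    unfolding contains_pop_def by blast
  have m: "i 1 < i 2" "i 2 < i 3" "i 3 < i 4" using strict_mono_onD[OF i(1)] by auto
  have l: "i 4 < length w" using i(2) by simp
  have "w!(i 2) < w!(i 1)" "w!(i 3) < w!(i 1)" "w!(i 3) < w!(i 4)" using i(3) by auto
  then show "occ4 w" unfolding occ4_def using m l by blast
next
  assume "occ4 w"
  then obtain i1 i2 i3 i4 where h: "i1<i2" "i2<i3" "i3<i4" "i4 < length w"
      "w!i2 < w!i1" "w!i3 < w!i1" "w!i3 < w!i4" unfolding occ4_def by blast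
  define i where "i = (\<lambda>x::nat. if x = 1 then i1 else if x = 2 then i2 else if x = 3 then i3 else i4)"
  have iv: "i 1 = i1" "i 2 = i2" "i 3 = i3" "i 4 = i4" unfolding i_def by simp_all
  have r: "x \<in> {1..4} \<longleftrightarrow> x = 1 \<or> x = 2 \<or> x = 3 \<or> x = (4::nat)" for x by auto
  have "strict_mono_on {1..4} i"
  proof (rule strict_mono_onI)
    fix r s :: nat assume rs: "r \<in> {1..4}" "s \<in> {1..4}" "r < s"
    then show "i r < i s" unfolding r using h(1-3) iv by auto
  qed
  moreover have "\<forall>x\<in>{1..4}. i x < length w"
  proof
    fix x assume "x \<in> {1..4::nat}"
    then have "x = 1 \<or> x = 2 \<or> x = 3 \<or> x = 4" using r by blast
    then show "i x < length w" using h iv by auto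
  qed
  moreover have "\<forall>(x,y)\<in>{(1::nat,2::nat),(1,3),(4,3)}. w ! (i x) > w ! (i y)" using h iv by auto
  ultimately show "contains_pop w 4 {(1,2),(1,3),(4,3)}" unfolding contains_pop_def by blast
qed

lemma vals: fixes a b c d :: nat
  assumes "distinct [a,b,c,d]"
  shows "(b<a \<and> c<a \<and> c<d) \<longleftrightarrow> (\<exists>q\<in>{[4,3,1,2], [4,2,1,3], [3,2,1,4], [4,1,2,3], [3,1,2,4::nat]}.
     \<forall>x<4. \<forall>y<4. [a,b,c,d]!x < [a,b,c,d]!y \<longleftrightarrow> q!x < q!y)"
proof
  assume h: "b<a \<and> c<a \<and> c<d"
  have "a \<noteq> d" "b \<noteq> c" "b \<noteq> d" using assms by auto
  then consider "d < a" "b < c" | "d < a" "c < b" "b < d" | "d < a" "d < b" | "a < d" "b < c" | "a < d" "c < b"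
    using h by linarith
  then show "\<exists>q\<in>{[4,3,1,2], [4,2,1,3], [3,2,1,4], [4,1,2,3], [3,1,2,4::nat]}.
     \<forall>x<4. \<forall>y<4. [a,b,c,d]!x < [a,b,c,d]!y \<longleftrightarrow> q!x < q!y"
  proof cases
    case 1 then show ?thesis using h by (intro bexI[of _ "[4,1,2,3]"]) (auto simp: all4)
  next
    case 2 then show ?thesis using h by (intro bexI[of _ "[4,2,1,3]"]) (auto simp: all4)
  next
    case 3 then show ?thesis using h by (intro bexI[of _ "[4,3,1,2]"]) (auto simp: all4)
  next
    case 4 then show ?thesis using h by (intro bexI[of _ "[3,1,2,4]"]) (auto simp: all4)
  next
    case 5 then show ?thesis using h by (intro bexI[of _ "[3,2,1,4]"]) (auto simp: all4)
  qed
next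
  assume "\<exists>q\<in>{[4,3,1,2], [4,2,1,3], [3,2,1,4], [4,1,2,3], [3,1,2,4::nat]}.
     \<forall>x<4. \<forall>y<4. [a,b,c,d]!x < [a,b,c,d]!y \<longleftrightarrow> q!x < q!y"
  then obtain q where q: "q \<in> {[4,3,1,2], [4,2,1,3], [3,2,1,4], [4,1,2,3], [3,1,2,4::nat]}"
    "\<forall>x<4. \<forall>y<4. [a,b,c,d]!x < [a,b,c,d]!y \<longleftrightarrow> q!x < q!y" by blast
  have e: "b < a \<longleftrightarrow> q!1 < q!0" "c < a \<longleftrightarrow> q!2 < q!0" "c < d \<longleftrightarrow> q!2 < q!3"
    using q(2)[rule_format, of 1 0] q(2)[rule_format, of 2 0] q(2)[rule_format, of 2 3]
    by (simp_all add: numeral_eq_Suc)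
  show "b<a \<and> c<a \<and> c<d" using q(1) unfolding e by (auto simp: numeral_eq_Suc)
qed

lemma fps_id: fixes r :: "nat \<Rightarrow> real"
  assumes r: "\<And>n. 4 * r n = 3^n - 2*real n + 3"
  shows "Abs_fps r = (1 - 2*fps_X)^2 / ((1 - 3*fps_X) * (1 - fps_X)^2)"
proof -
  let ?f = "Abs_fps r"
  let ?D = "1 - 5*fps_X + 7*fps_X^2 - 3*fps_X^3 :: real fps"
  let ?N = "1 - 4*fps_X + 4*fps_X^2 :: real fps"
  have D: "(1 - 3*fps_X) * (1 - fps_X)^2 = ?D"
    by (simp add: algebra_simps power2_eq_square power3_eq_cube)
  have N: "(1 - 2*fps_X)^2 = ?N"
    by (simp add: algebra_simps power2_eq_square)
  have e: "?f * ?D = ?f - 5*(fps_X * ?f) + 7*(fps_X^2 * ?f) - 3*(fps_X^3*?f)"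
    by (simp add: algebra_simps)
  have prod: "?f * ?D = ?N"
  proof (rule fps_ext)
    fix n
    have c: "(?f * ?D) $ n = r n - 5 * (if n = 0 then 0 else r (n-1)) + 7 * (if n < 2 then 0 else r (n-2))
        - 3 * (if n < 3 then 0 else r (n-3))"
      unfolding e by (simp add: fps_X_power_mult_nth numeral_fps_const)
    have cN: "?N $ n = (if n = 0 then 1 else 0) - 4 * (if n = 1 then 1 else 0) + 4 * (if n = 2 then 1 else 0)"
      by (simp add: numeral_fps_const)
    show "(?f * ?D) $ n = ?N $ n"
    proof -
      have "n = 0 \<or> n = 1 \<or> n = 2 \<or> n = (n - 3) + 3" by linarith
      then consider "n = 0" | "n = 1" | "n = 2" | m where "n = m + 3" by blast
      then show ?thesis
      proof cases
        case 1 then show ?thesis using c cN r[of 0] by simp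
      next
        case 2 then show ?thesis using c cN r[of 0] r[of 1] by simp
      next
        case 3 then show ?thesis using c cN r[of 0] r[of 1] r[of 2] by simp
      next
        case 4
        have "4 * r (m+3) = 27 * 3^m - 2 * real m - 3" using r[of "m+3"] by (simp add: power_add)
        moreover have "4 * r (m+2) = 9 * 3^m - 2 * real m - 1" using r[of "m+2"] by (simp add: power_add)
        moreover have "4 * r (m+1) = 3 * 3^m - 2 * real m + 1" using r[of "m+1"] by (simp add: power_add)
        moreover have "4 * r m = 3^m - 2 * real m + 3" using r[of m] by simp
        ultimately have "r (m+3) - 5 * r (m+2) + 7 * r (m+1) - 3 * r m = 0" by linarith
        then show ?thesis using c cN 4 by (simp add: numeral_eq_Suc)
      qed
    qed
  qed
  have D0: "?D $ 0 \<noteq> 0" by simp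
  have "?N / ?D = ?N * inverse ?D" by (rule fps_divide_unit[OF D0])
  also have "\<dots> = ?f * (?D * inverse ?D)" unfolding prod[symmetric] by (simp add: mult.assoc)
  also have "\<dots> = ?f" using inverse_mult_eq_1'[OF D0] by simp
  finally show ?thesis unfolding D N by simp
qed

lemma occ4_classical: assumes "distinct w"
  shows "occ4 w \<longleftrightarrow> (\<exists>q\<in>{[4,3,1,2], [4,2,1,3], [3,2,1,4], [4,1,2,3], [3,1,2,4::nat]}. contains_classical w q)"
proof
  assume "occ4 w"
  then obtain i1 i2 i3 i4 where h: "i1<i2" "i2<i3" "i3<i4" "i4 < length w"
      "w!i2 < w!i1" "w!i3 < w!i1" "w!i3 < w!i4" unfolding occ4_def by blast
  have d: "distinct [w!i1,w!i2,w!i3,w!i4]" using h assms by (auto simp: nth_eq_iff_index_eq)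
  obtain q where q: "q \<in> {[4,3,1,2], [4,2,1,3], [3,2,1,4], [4,1,2,3], [3,1,2,4::nat]}"
    "\<forall>x<4. \<forall>y<4. [w!i1,w!i2,w!i3,w!i4]!x < [w!i1,w!i2,w!i3,w!i4]!y \<longleftrightarrow> q!x < q!y"
    using vals[OF d] h by blast
  have lq: "length q = 4" using q(1) by auto
  have "contains_classical w q" unfolding cc4[OF lq] using h q(2) by blast
  then show "\<exists>q\<in>{[4,3,1,2], [4,2,1,3], [3,2,1,4], [4,1,2,3], [3,1,2,4::nat]}. contains_classical w q"
    using q(1) by blast
next
  assume "\<exists>q\<in>{[4,3,1,2], [4,2,1,3], [3,2,1,4], [4,1,2,3], [3,1,2,4::nat]}. contains_classical w q"
  then obtain q where q: "q \<in> {[4,3,1,2], [4,2,1,3], [3,2,1,4], [4,1,2,3], [3,1,2,4::nat]}"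
    "contains_classical w q" by blast
  have lq: "length q = 4" using q(1) by auto
  obtain i1 i2 i3 i4 where h: "i1<i2" "i2<i3" "i3<i4" "i4 < length w"
   "\<forall>x<4. \<forall>y<4. [w!i1,w!i2,w!i3,w!i4]!x < [w!i1,w!i2,w!i3,w!i4]!y \<longleftrightarrow> q!x < q!y"
    using q(2) unfolding cc4[OF lq] by blast
  have d: "distinct [w!i1,w!i2,w!i3,w!i4]" using h assms by (auto simp: nth_eq_iff_index_eq)
  have "w!i2 < w!i1 \<and> w!i3 < w!i1 \<and> w!i3 < w!i4" using vals[OF d] q(1) h(5) by blast
  then show "occ4 w" unfolding occ4_def using h by blast
qed

theorem theorem3p11:
  fixes a :: "nat \<Rightarrow> nat"
  defines "p \<equiv> {(1::nat, 2::nat), (1, 3), (4, 3)}"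
  defines "a \<equiv> (\<lambda>n. card (pop_avoiders n 4 p))"
  shows "(\<forall>n. pop_avoiders n 4 p =
            {w \<in> perms n. \<forall>q \<in> {[4,3,1,2], [4,2,1,3], [3,2,1,4], [4,1,2,3], [3,1,2,4]}.
                             avoids_classical w q})
       \<and> a 0 = 1 \<and> a 1 = 1
       \<and> (\<forall>n\<ge>2. int (a n) = 4 * int (a (n - 1)) - 3 * int (a (n - 2)) + 1)
       \<and> (\<forall>n. real (a n) = (3 ^ n - 2 * real n + 3) / 4)
       \<and> Abs_fps (\<lambda>n. real (a n)) =
           (1 - 2 * fps_X) ^ 2 / ((1 - 3 * fps_X) * (1 - fps_X) ^ 2)"
proof -
  have P: "pop_avoiders n 4 p = {\<pi>\<in>perms n. \<not> occ4 \<pi>}" for n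
    unfolding pop_avoiders_def avoids_pop_def p_def pop_occ4 by simp
  have A: "a n = AV n" for n unfolding a_def AV_def P by simp
  have C1: "\<forall>n. pop_avoiders n 4 p =
            {w \<in> perms n. \<forall>q \<in> {[4,3,1,2], [4,2,1,3], [3,2,1,4], [4,1,2,3], [3,1,2,4]}.
                             avoids_classical w q}"
  proof (intro allI set_eqI)
    fix n w
    show "w \<in> pop_avoiders n 4 p \<longleftrightarrow> w \<in> {w \<in> perms n. \<forall>q \<in> {[4,3,1,2], [4,2,1,3], [3,2,1,4], [4,1,2,3], [3,1,2,4]}.
                             avoids_classical w q}"
    proof (cases "w \<in> perms n")
      case False then show ?thesis unfolding P by simp
    next
      case True
      then have "distinct w" unfolding perms_def by simp
      then show ?thesis unfolding P avoids_classical_def using occ4_classical True by auto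
    qed
  qed
  have R: "4 * real (a n) + 2 * real n = 3^n + 3" for n
  proof -
    have "real (4 * AV n + 2 * n) = real (3^n + 3)" using AV_closed[of n] by (simp only:)
    then show ?thesis unfolding A by simp
  qed
  have I: "4 * int (a n) + 2 * int n = 3^n + 3" for n
  proof -
    have "int (4 * AV n + 2 * n) = int (3^n + 3)" using AV_closed[of n] by (simp only:)
    then show ?thesis unfolding A by simp
  qed
  have a0: "a 0 = 1" using AV_closed[of 0] unfolding A by simp
  have a1: "a 1 = 1" using AV_closed[of 1] unfolding A by simp
  have rec: "\<forall>n\<ge>2. int (a n) = 4 * int (a (n - 1)) - 3 * int (a (n - 2)) + 1"
  proof (intro allI impI)
    fix n :: nat assume "2 \<le> n"
    then obtain m where m: "n = m + 2" by (metis le_add_diff_inverse2)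
    have h2: "4 * int (a (m+2)) + 2 * int m + 4 = 9 * 3^m + 3" using I[of "m+2"] by (simp add: power_add)
    have h1: "4 * int (a (m+1)) + 2 * int m + 2 = 3 * 3^m + 3" using I[of "m+1"] by (simp add: power_add)
    have h0: "4 * int (a m) + 2 * int m = 3^m + 3" using I[of m] by simp
    have "int (a (m+2)) = 4 * int (a (m+1)) - 3 * int (a m) + 1" using h0 h1 h2 by linarith
    then show "int (a n) = 4 * int (a (n - 1)) - 3 * int (a (n - 2)) + 1" using m
      by (simp add: numeral_2_eq_2)
  qed
  have cf: "\<forall>n. real (a n) = (3 ^ n - 2 * real n + 3) / 4"
  proof
    fix n show "real (a n) = (3 ^ n - 2 * real n + 3) / 4" using R[of n] by simp
  qed
  have fp: "Abs_fps (\<lambda>n. real (a n)) = (1 - 2 * fps_X) ^ 2 / ((1 - 3 * fps_X) * (1 - fps_X) ^ 2)"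
  proof (rule fps_id)
    fix n show "4 * real (a n) = 3^n - 2*real n + 3" using R[of n] by linarith
  qed
  show ?thesis using C1 a0 a1 rec cf fp by blast
qed

end
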